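(* If $C$ is an $(n,k)$ linear code over $H(\mathbb{Z})_{2+e_1+e_2+e_3}$ correcting all errors of Lipschitz weight $2$ or less, then $(7^2)^{n-k}\ge 32n^2+1$. If $C$ is an $(n,k)$ linear code over $H(\mathbb{Z})_{3+e_1+e_2}$ correcting all errors of Lipschitz weight $2$ or less, then $(11^2)^{n-k}\ge 32n^2+1$.
   Context: $H(\mathbb{Z})=\{a_0+a_1e_1+a_2e_2+a_3e_3:a_i\in\mathbb{Z}\}$ (Lipschitz integers) with quaternion multiplication $e_1^2=e_2^2=e_3^2=-1$, $e_1e_2=-e_2e_1=e_3$, $e_3e_1=-e_1e_3=e_2$, $e_2e_3=-e_3e_2=e_1$; $N(q)=a_0^2+a_1^2+a_2^2+a_3^2$. Right congruence: $q_1\equiv_r q_2 \pmod\pi$ iff $q_1-q_2=\delta\pi$ for some $\delta\in H(\mathbb{Z})$; $H(\mathbb{Z})_\pi=H(\mathbb{Z})/H(\mathbb{Z})\pi$, which has $N(\pi)^2$ elements (here $N(2+e_1+e_2+e_3)=7$, $N(3+e_1+e_2)=11$). The Lipschitz weight of a class $\gamma$ is $\min\{|a_0|+|a_1|+|a_2|+|a_3| : a_0+a_1e_1+a_2e_2+a_3e_3\in\gamma\}$; the weight of a vector is the sum of the weights of its components. An $(n,k)$ linear code over $H(\mathbb{Z})_\pi$ is an additive subgroup $C\subseteq H(\mathbb{Z})_\pi^n$ such that $H(\mathbb{Z})_\pi^n/C$ has exactly $(N(\pi)^2)^{n-k}$ cosets. $C$ corrects all errors of weight $t$ or less if all vectors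 of Lipschitz weight at most $t$ lie in pairwise distinct cosets of $C$. *)

theory Defs
  imports Main "HOL-Library.FuncSet"
begin

text \<open>Lipschitz integers a0 + a1 e1 + a2 e2 + a3 e3 with integer coefficients.\<close>
datatype lip = Lip int int int int

fun ladd :: "lip \<Rightarrow> lip \<Rightarrow> lip" where
  "ladd (Lip a0 a1 a2 a3) (Lip b0 b1 b2 b3) = Lip (a0+b0) (a1+b1) (a2+b2) (a3+b3)"

fun lsub :: "lip \<Rightarrow> lip \<Rightarrow> lip" where
  "lsub (Lip a0 a1 a2 a3) (Lip b0 b1 b2 b3) = Lip (a0-b0) (a1-b1) (a2-b2) (a3-b3)"

text \<open>Hamilton product: e1^2=e2^2=e3^2=-1, e1e2=e3, e2e3=e1, e3e1=e2.\<close>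
fun lmul :: "lip \<Rightarrow> lip \<Rightarrow> lip" where
  "lmul (Lip a0 a1 a2 a3) (Lip b0 b1 b2 b3) =
     Lip (a0*b0 - a1*b1 - a2*b2 - a3*b3)
         (a0*b1 + a1*b0 + a2*b3 - a3*b2)
         (a0*b2 - a1*b3 + a2*b0 + a3*b1)
         (a0*b3 + a1*b2 - a2*b1 + a3*b0)"

fun lnorm :: "lip \<Rightarrow> int" where
  "lnorm (Lip a0 a1 a2 a3) = a0^2 + a1^2 + a2^2 + a3^2"

fun lwt :: "lip \<Rightarrow> nat" where
  "lwt (Lip a0 a1 a2 a3) = nat \<bar>a0\<bar> + nat \<bar>a1\<bar> + nat \<bar>a2\<bar> + nat \<bar>a3\<bar>"

definition rcong :: "lip \<Rightarrow> lip \<Rightarrow> lip \<Rightarrow> bool" where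
  "rcong \<pi> q1 q2 \<longleftrightarrow> (\<exists>\<delta>. lsub q1 q2 = lmul \<delta> \<pi>)"

definition rcls :: "lip \<Rightarrow> lip \<Rightarrow> lip set" where
  "rcls \<pi> q = {r. rcong \<pi> r q}"

definition Hpi :: "lip \<Rightarrow> lip set set" where
  "Hpi \<pi> = range (rcls \<pi>)"

definition cadd :: "lip set \<Rightarrow> lip set \<Rightarrow> lip set" where
  "cadd A B = {ladd a b | a b. a \<in> A \<and> b \<in> B}"

definition cwt :: "lip set \<Rightarrow> nat" where
  "cwt A = (LEAST w. \<exists>q\<in>A. lwt q = w)"

definition vspace :: "lip \<Rightarrow> nat \<Rightarrow> (nat \<Rightarrow> lip set) set" where
  "vspace \<pi> n = PiE {..<n} (\<lambda>_. Hpi \<pi>)"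

definition vadd :: "nat \<Rightarrow> (nat \<Rightarrow> lip set) \<Rightarrow> (nat \<Rightarrow> lip set) \<Rightarrow> (nat \<Rightarrow> lip set)" where
  "vadd n u v = restrict (\<lambda>i. cadd (u i) (v i)) {..<n}"

definition vzero :: "lip \<Rightarrow> nat \<Rightarrow> (nat \<Rightarrow> lip set)" where
  "vzero \<pi> n = restrict (\<lambda>i. rcls \<pi> (Lip 0 0 0 0)) {..<n}"

definition vneg :: "lip \<Rightarrow> nat \<Rightarrow> (nat \<Rightarrow> lip set) \<Rightarrow> (nat \<Rightarrow> lip set)" where
  "vneg \<pi> n u = restrict (\<lambda>i. {lsub (Lip 0 0 0 0) q | q. q \<in> u i}) {..<n}"

definition vwt :: "nat \<Rightarrow> (nat \<Rightarrow> lip set) \<Rightarrow> nat" where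
  "vwt n v = (\<Sum>i<n. cwt (v i))"

definition coset :: "nat \<Rightarrow> (nat \<Rightarrow> lip set) set \<Rightarrow> (nat \<Rightarrow> lip set) \<Rightarrow> (nat \<Rightarrow> lip set) set" where
  "coset n C v = {vadd n v c | c. c \<in> C}"

definition linear_code :: "lip \<Rightarrow> nat \<Rightarrow> nat \<Rightarrow> (nat \<Rightarrow> lip set) set \<Rightarrow> bool" where
  "linear_code \<pi> n k C \<longleftrightarrow>
     C \<subseteq> vspace \<pi> n \<and> vzero \<pi> n \<in> C \<and>
     (\<forall>u\<in>C. \<forall>v\<in>C. vadd n u v \<in> C) \<and> (\<forall>u\<in>C. vneg \<pi> n u \<in> C) \<and>
     card (coset n C ` vspace \<pi> n) = (nat (lnorm \<pi>) ^ 2) ^ (n - k)"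

definition corrects :: "lip \<Rightarrow> nat \<Rightarrow> (nat \<Rightarrow> lip set) set \<Rightarrow> nat \<Rightarrow> bool" where
  "corrects \<pi> n C t \<longleftrightarrow>
     (\<forall>u\<in>vspace \<pi> n. \<forall>v\<in>vspace \<pi> n. vwt n u \<le> t \<longrightarrow> vwt n v \<le> t \<longrightarrow> u \<noteq> v \<longrightarrow>
        coset n C u \<noteq> coset n C v)"

end

theory Submission
  imports Defs
begin

definition reps :: "lip list" where
  "reps = [Lip 0 0 0 0, Lip (-1) 0 0 0, Lip 0 (-1) 0 0, Lip 0 0 (-1) 0, Lip 0 0 0 (-1), Lip 0 0 0 1, Lip 0 0 1 0, Lip 0 1 0 0, Lip 1 0 0 0, Lip (-2) 0 0 0, Lip (-1) (-1) 0 0, Lip (-1) 0 (-1) 0, Lip (-1) 0 0 (-1), Lip (-1) 0 0 1, Lip (-1) 0 1 0, Lip (-1) 1 0 0, Lip 0 (-2) 0 0, Lip 0 (-1) (-1) 0, Lip 0 (-1) 0 (-1), Lip 0 (-1) 0 1, Lip 0 (-1) 1 0, Lip 0 0 (-2) 0, Lip 0 0 (-1) (-1), Lip 0 0 (-1) 1, Lip 0 0 0 (-2), Lip 0 0 0 2, Lip 0 0 1 (-1), Lip 0 0 1 1, Lip 0 0 2 0, Lip 0 1 (-1) 0, Lip 0 1 0 (-1), Lip 0 1 0 1, Lip 0 1 1 0, Lip 0 2 0 0, Lip 1 (-1) 0 0, Lip 1 0 (-1) 0, Lip 1 0 0 (-1), Lip 1 0 0 1, Lip 1 0 1 0, Lip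 1 1 0 0, Lip 2 0 0 0]"

fun key :: "lip \<Rightarrow> lip \<Rightarrow> int \<times> int \<times> int \<times> int" where
  "key (Lip p0 p1 p2 p3) (Lip a0 a1 a2 a3) =
    (let N = p0^2+p1^2+p2^2+p3^2 in
     ((a0*p0 + a1*p1 + a2*p2 + a3*p3) mod N,
      (- a0*p1 + a1*p0 - a2*p3 + a3*p2) mod N,
      (- a0*p2 + a1*p3 + a2*p0 - a3*p1) mod N,
      (- a0*p3 - a1*p2 + a2*p1 + a3*p0) mod N))"

lemma key_cong:
  assumes "rcong \<pi> q1 q2"
  shows "key \<pi> q1 = key \<pi> q2"
proof -
  obtain d where d: "lsub q1 q2 = lmul d \<pi>" using assms unfolding rcong_def by blast
  obtain p0 p1 p2 p3 where p: "\<pi> = Lip p0 p1 p2 p3" by (cases \<pi>)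
  obtain a0 a1 a2 a3 where a: "q1 = Lip a0 a1 a2 a3" by (cases q1)
  obtain b0 b1 b2 b3 where b: "q2 = Lip b0 b1 b2 b3" by (cases q2)
  obtain d0 d1 d2 d3 where dd: "d = Lip d0 d1 d2 d3" by (cases d)
  define N where "N = p0^2+p1^2+p2^2+p3^2"
  from d have e0: "a0 = b0 + (d0*p0 - d1*p1 - d2*p2 - d3*p3)"
    and e1: "a1 = b1 + (d0*p1 + d1*p0 + d2*p3 - d3*p2)"
    and e2: "a2 = b2 + (d0*p2 - d1*p3 + d2*p0 + d3*p1)"
    and e3: "a3 = b3 + (d0*p3 + d1*p2 - d2*p1 + d3*p0)"
    by (simp_all add: a b p dd algebra_simps)
  have h0: "a0*p0 + a1*p1 + a2*p2 + a3*p3 = (b0*p0 + b1*p1 + b2*p2 + b3*p3) + d0 * N"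
    unfolding e0 e1 e2 e3 N_def by (simp add: algebra_simps power2_eq_square)
  have h1: "- a0*p1 + a1*p0 - a2*p3 + a3*p2 = (- b0*p1 + b1*p0 - b2*p3 + b3*p2) + d1 * N"
    unfolding e0 e1 e2 e3 N_def by (simp add: algebra_simps power2_eq_square)
  have h2: "- a0*p2 + a1*p3 + a2*p0 - a3*p1 = (- b0*p2 + b1*p3 + b2*p0 - b3*p1) + d2 * N"
    unfolding e0 e1 e2 e3 N_def by (simp add: algebra_simps power2_eq_square)
  have h3: "- a0*p3 - a1*p2 + a2*p1 + a3*p0 = (- b0*p3 - b1*p2 + b2*p1 + b3*p0) + d3 * N"
    unfolding e0 e1 e2 e3 N_def by (simp add: algebra_simps power2_eq_square)
  show ?thesis
    unfolding a b p key.simps Let_def N_def[symmetric] h0 h1 h2 h3 by simp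
qed

lemma rcong_refl: "rcong \<pi> q q"
  unfolding rcong_def
  by (rule exI[of _ "Lip 0 0 0 0"], cases q, cases \<pi>, simp)

lemma mem_rcls: "q \<in> rcls \<pi> q"
  unfolding rcls_def by (simp add: rcong_refl)

lemma rcls_inj:
  assumes "distinct (map (key \<pi>) reps)" "q1 \<in> set reps" "q2 \<in> set reps"
    "rcls \<pi> q1 = rcls \<pi> q2"
  shows "q1 = q2"
proof -
  have "q1 \<in> rcls \<pi> q2" using assms(4) mem_rcls by metis
  hence "rcong \<pi> q1 q2" unfolding rcls_def by simp
  hence "key \<pi> q1 = key \<pi> q2" by (rule key_cong)
  moreover have "inj_on (key \<pi>) (set reps)" using assms(1) by (simp add: distinct_map)
  ultimately show ?thesis using assms(2,3) by (meson inj_onD)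
qed

lemma cwt_le: "cwt (rcls \<pi> q) \<le> lwt q"
  unfolding cwt_def by (rule Least_le, use mem_rcls in blast)

fun gen :: "nat \<Rightarrow> nat \<Rightarrow> lip list list" where
  "gen t 0 = [[]]"
| "gen t (Suc n) = concat (map (\<lambda>q. map ((#) q) (gen (t - lwt q) n)) (filter (\<lambda>q. lwt q \<le> t) reps))"

lemma len0: "length (gen 0 n) = 1"
  by (induction n) (simp_all add: reps_def)

lemma len1: "length (gen 1 n) = 8*n+1"
  by (induction n) (simp_all add: reps_def len0)

lemma len2: "length (gen 2 n) = 32*n^2+8*n+1"
  by (induction n) (simp_all add: reps_def len0 len1[simplified] algebra_simps power2_eq_square)

lemma distinct_cons_concat:
  "distinct qs \<Longrightarrow> (\<forall>q\<in>set qs. distinct (g q)) \<Longrightarrow>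
   distinct (concat (map (\<lambda>q. map ((#) q) (g q)) qs))"
  by (induction qs) (auto simp: distinct_map)

lemma distinct_reps: "distinct reps"
  by (simp add: reps_def)

lemma gen_distinct: "distinct (gen t n)"
  by (induction n arbitrary: t) (simp_all add: distinct_cons_concat distinct_reps)

lemma gen_mem: "xs \<in> set (gen t n) \<Longrightarrow>
  length xs = n \<and> set xs \<subseteq> set reps \<and> sum_list (map lwt xs) \<le> t"
proof (induction n arbitrary: t xs)
  case 0 then show ?case by simp
next
  case (Suc n)
  then obtain q ys where q: "q \<in> set reps" "lwt q \<le> t" "ys \<in> set (gen (t - lwt q) n)"
    "xs = q # ys" by auto
  with Suc.IH[of ys "t - lwt q"] show ?case by auto
qed

definition vec :: "lip \<Rightarrow> nat \<Rightarrow> lip list \<Rightarrow> (nat \<Rightarrow> lip set)" where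
  "vec \<pi> n xs = restrict (\<lambda>i. rcls \<pi> (xs!i)) {..<n}"

lemma vec_vspace: "vec \<pi> n xs \<in> vspace \<pi> n"
  unfolding vec_def vspace_def Hpi_def by auto

lemma vec_wt:
  assumes "length xs = n"
  shows "vwt n (vec \<pi> n xs) \<le> sum_list (map lwt xs)"
proof -
  have "vwt n (vec \<pi> n xs) = (\<Sum>i<n. cwt (rcls \<pi> (xs!i)))"
    unfolding vwt_def vec_def by simp
  also have "\<dots> \<le> (\<Sum>i<n. lwt (xs!i))" by (rule sum_mono) (rule cwt_le)
  also have "\<dots> = sum_list (map lwt xs)"
    using assms by (simp add: sum_list_sum_nth atLeast0LessThan)
  finally show ?thesis .
qed

lemma vec_inj:
  assumes "distinct (map (key \<pi>) reps)"
  shows "inj_on (vec \<pi> n) (set (gen t n))"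
proof (rule inj_onI)
  fix xs ys assume xs: "xs \<in> set (gen t n)" and ys: "ys \<in> set (gen t n)"
    and eq: "vec \<pi> n xs = vec \<pi> n ys"
  note X = gen_mem[OF xs] and Y = gen_mem[OF ys]
  show "xs = ys"
  proof (rule nth_equalityI)
    show "length xs = length ys" using X Y by simp
    fix i assume i: "i < length xs"
    have "vec \<pi> n xs i = vec \<pi> n ys i" using eq by simp
    moreover have "i < n" using i X by simp
    ultimately have "rcls \<pi> (xs!i) = rcls \<pi> (ys!i)" unfolding vec_def by simp
    moreover have "xs!i \<in> set reps" using X i nth_mem by blast
    moreover have "ys!i \<in> set reps" using X Y i nth_mem by (metis in_mono)
    ultimately show "xs!i = ys!i" using rcls_inj[OF assms] by blast
  qed
qed

lemma general:
  assumes D: "distinct (map (key \<pi>) reps)" and P: "nat (lnorm \<pi>) > 0"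
    and L: "linear_code \<pi> n k C" and Co: "corrects \<pi> n C 2"
  shows "(nat (lnorm \<pi>) ^ 2) ^ (n - k) \<ge> 32 * n^2 + 1"
proof -
  define V where "V = vec \<pi> n ` set (gen 2 n)"
  have Vsub: "V \<subseteq> vspace \<pi> n" unfolding V_def using vec_vspace by blast
  have Vwt: "\<forall>v\<in>V. vwt n v \<le> 2"
    unfolding V_def using vec_wt gen_mem by (fastforce intro: order_trans)
  have inj: "inj_on (coset n C) V"
    using Co Vsub Vwt unfolding corrects_def inj_on_def by blast
  have cardV: "card V = 32*n^2+8*n+1"
    unfolding V_def using card_image[OF vec_inj[OF D]] distinct_card[OF gen_distinct] len2
    by simp
  have cardc: "card (coset n C ` vspace \<pi> n) = (nat (lnorm \<pi>) ^ 2) ^ (n - k)"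
    using L unfolding linear_code_def by blast
  have fin: "finite (coset n C ` vspace \<pi> n)"
  proof (rule ccontr)
    assume "infinite (coset n C ` vspace \<pi> n)"
    hence "card (coset n C ` vspace \<pi> n) = 0" by (rule card.infinite)
    with cardc P show False by simp
  qed
  have "card (coset n C ` V) \<le> card (coset n C ` vspace \<pi> n)"
    by (rule card_mono[OF fin]) (use Vsub in blast)
  then show ?thesis using card_image[OF inj] cardV cardc by simp
qed

theorem theorem9:
  shows "(\<forall>n k C. linear_code (Lip 2 1 1 1) n k C \<and> corrects (Lip 2 1 1 1) n C 2
            \<longrightarrow> ((7::nat)^2)^(n - k) \<ge> 32 * n^2 + 1)
       \<and> (\<forall>n k C. linear_code (Lip 3 1 1 0) n k C \<and> corrects (Lip 3 1 1 0) n C 2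
            \<longrightarrow> ((11::nat)^2)^(n - k) \<ge> 32 * n^2 + 1)"
proof -
  have d1: "distinct (map (key (Lip 2 1 1 1)) reps)" by code_simp
  have d2: "distinct (map (key (Lip 3 1 1 0)) reps)" by code_simp
  have p1: "nat (lnorm (Lip 2 1 1 1)) > 0" by simp
  have p2: "nat (lnorm (Lip 3 1 1 0)) > 0" by simp
  show ?thesis using general[OF d1 p1] general[OF d2 p2] by auto
qed

end
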